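(* Let $(V,\Omega)$ be a finite-dimensional real symplectic vector space and let $A:V\to V$ be a linear map with $\Omega(Ax,y)+\Omega(x,Ay)=0$ for all $x,y\in V$ and $A^2=0$. Let $\theta^A$ be the one-form on $V$ given by $\theta^A_z(v_z)=\frac{1}{2}\Omega(z-Az,v)$. Then ${\rm Aut}(V,\theta^A)=\{g\in{\rm Sp}(V,\Omega): gA=Ag\}$, where ${\rm Aut}(V,\theta^A)$ is the group of all diffeomorphisms $g:V\to V$ satisfying $g^*\theta^A=\theta^A$.
   Context: $V$ is a finite-dimensional real vector space and $\Omega$ a nonsingular alternating bilinear form on $V$. For $z,v\in V$, $v_z\in T_zV$ denotes the tangent vector at $z$ corresponding to $v$ under the canonical identification $T_zV\cong V$. Equivalently, $\theta^A=\theta^0+d\psi^A$ where $\theta^0_z(v_z)=\frac12\Omega(z,v)$ and $\psi^A(z)=\frac14\Omega(z,Az)$. For a smooth map $g:V\to V$, $(g^*\theta^A)_z(v_z)=\frac12\Omega(g(z)-Ag(z),g'_z v)$, where $g'_z$ is the derivative of $g$ at $z$. ${\rm Sp}(V,\Omega)$ is the group of linear automorphisms of $V$ preserving $\Omega$. *)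

theory Defs
  imports "HOL-Analysis.Analysis"
begin

text \<open>Smooth (C-infinity) maps between finite-dimensional real spaces: f is
differentiable everywhere, continuous, and each directional derivative
z \<mapsto> Df(z) v is again smooth (coinductively, i.e. all iterated
derivatives exist and are continuous).\<close>
coinductive smooth_map :: "('a::euclidean_space \<Rightarrow> 'b::euclidean_space) \<Rightarrow> bool" where
  "\<lbrakk> \<forall>z. f differentiable (at z); continuous_on UNIV f;
     \<forall>v. smooth_map (\<lambda>z. frechet_derivative f (at z) v) \<rbrakk> \<Longrightarrow> smooth_map f"

definition diffeomorphism :: "('a::euclidean_space \<Rightarrow> 'a) \<Rightarrow> bool" where
  "diffeomorphism g \<longleftrightarrow> bij g \<and> smooth_map g \<and> smooth_map (inv g)"

definition symplectic_form :: "('a::euclidean_space \<Rightarrow> 'a \<Rightarrow> real) \<Rightarrow> bool" where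
  "symplectic_form \<Omega> \<longleftrightarrow> bilinear \<Omega> \<and> (\<forall>x. \<Omega> x x = 0)
     \<and> (\<forall>x. (\<forall>y. \<Omega> x y = 0) \<longrightarrow> x = 0)"

definition Sp :: "('a::euclidean_space \<Rightarrow> 'a \<Rightarrow> real) \<Rightarrow> ('a \<Rightarrow> 'a) set" where
  "Sp \<Omega> = {g. linear g \<and> bij g \<and> (\<forall>x y. \<Omega> (g x) (g y) = \<Omega> x y)}"

text \<open>One-forms on V: \<alpha> z v is the value of \<alpha>_z on the tangent vector v_z.\<close>
definition theta :: "('a::euclidean_space \<Rightarrow> 'a \<Rightarrow> real) \<Rightarrow> ('a \<Rightarrow> 'a) \<Rightarrow> 'a \<Rightarrow> 'a \<Rightarrow> real" where
  "theta \<Omega> A z v = (1/2) * \<Omega> (z - A z) v"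

definition pullback :: "('a::euclidean_space \<Rightarrow> 'a) \<Rightarrow> ('a \<Rightarrow> 'a \<Rightarrow> real) \<Rightarrow> 'a \<Rightarrow> 'a \<Rightarrow> real" where
  "pullback g \<alpha> z v = \<alpha> (g z) (frechet_derivative g (at z) v)"

definition Aut :: "('a::euclidean_space \<Rightarrow> 'a \<Rightarrow> real) \<Rightarrow> ('a \<Rightarrow> 'a) set" where
  "Aut \<alpha> = {g. diffeomorphism g \<and> pullback g \<alpha> = \<alpha>}"

end

theory Submission
  imports Defs "HOL-Real_Asymp.Real_Asymp"
begin


lemma smooth_affine:
  assumes "linear L"
  shows "smooth_map (\<lambda>z. L z + (c::'b::euclidean_space))"
proof -
  define X where "X = (\<lambda>f::'a::euclidean_space \<Rightarrow> 'b. \<exists>L c. linear L \<and> f = (\<lambda>z. L z + c))"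
  have "X (\<lambda>z. L z + c)" using assms unfolding X_def by blast
  then show ?thesis
  proof (rule smooth_map.coinduct)
    fix f assume "X f"
    then obtain L c where L: "linear L" and f: "f = (\<lambda>z. L z + c)" unfolding X_def by blast
    have bl: "bounded_linear L" using L linear_conv_bounded_linear by blast
    have d: "(f has_derivative L) (at z)" for z
      unfolding f using bounded_linear.has_derivative[OF bl has_derivative_ident] by (auto intro!: derivative_eq_intros)
    have fd: "frechet_derivative f (at z) = L" for z using d frechet_derivative_at by metis
    show "\<exists>f'. f = f' \<and> (\<forall>z. f' differentiable at z) \<and> continuous_on UNIV f' \<and> (\<forall>v. X (\<lambda>z. frechet_derivative f' (at z) v) \<or> smooth_map (\<lambda>z. frechet_derivative f' (at z) v))"
    proof (rule exI[of _ f], intro conjI allI refl)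
      show "f differentiable at z" for z using d differentiable_def by blast
      show "continuous_on UNIV f" unfolding f by (intro continuous_intros linear_continuous_on bl)
      show "X (\<lambda>z. frechet_derivative f (at z) v) \<or> smooth_map (\<lambda>z. frechet_derivative f (at z) v)" for v
        by (rule disjI1) (auto simp: fd X_def intro!: exI[of _ "\<lambda>_. 0"] linear_zero)
    qed
  qed
qed

lemma smooth_linear: "linear L \<Longrightarrow> smooth_map L"
  using smooth_affine[of L 0] by simp



lemma line_deriv:
  assumes "\<And>z. (F has_derivative DF z) (at z)"
  shows "((\<lambda>s. e \<bullet> F (a + s *\<^sub>R b)) has_derivative (\<lambda>t. t * (e \<bullet> DF (a + s *\<^sub>R b) b))) (at s within S)"
proof -
  have "((\<lambda>s. a + s *\<^sub>R b) has_derivative (\<lambda>t. t *\<^sub>R b)) (at s within S)"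
    by (auto intro!: derivative_eq_intros)
  from has_derivative_compose[OF this assms]
  have 1: "((\<lambda>s. F (a + s *\<^sub>R b)) has_derivative (\<lambda>t. DF (a + s *\<^sub>R b) (t *\<^sub>R b))) (at s within S)" .
  have lin: "linear (DF (a + s *\<^sub>R b))"
    using assms has_derivative_linear by blast
  have 2: "((\<lambda>s. e \<bullet> F (a + s *\<^sub>R b)) has_derivative (\<lambda>t. e \<bullet> DF (a + s *\<^sub>R b) (t *\<^sub>R b))) (at s within S)"
    using bounded_linear.has_derivative[OF bounded_linear_inner_right 1] .
  show ?thesis using 2 by (simp add: linear_scale[OF lin])
qed

lemma mvt2:
  fixes f :: "'a::euclidean_space \<Rightarrow> 'b::euclidean_space"
  assumes d1: "\<And>z. (f has_derivative Df z) (at z)"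
   and d2: "\<And>v. \<And>z. ((\<lambda>z. Df z v) has_derivative D2 z v) (at z)"
   and h: "h > 0"
  shows "\<exists>p. norm (p - z) \<le> h * (norm v + norm w) \<and>
     e \<bullet> (f (z + h *\<^sub>R w + h *\<^sub>R v) - f (z + h *\<^sub>R w) - f (z + h *\<^sub>R v) + f z) = h^2 * (e \<bullet> D2 p w v)"
proof -
  define \<phi> where "\<phi> s = e \<bullet> f ((z + h *\<^sub>R v) + s *\<^sub>R w) - e \<bullet> f (z + s *\<^sub>R w)" for s
  have "(\<phi> has_derivative (\<lambda>t. t * (e \<bullet> Df ((z + h *\<^sub>R v) + s *\<^sub>R w) w - e \<bullet> Df (z + s *\<^sub>R w) w))) (at s within {0..h})" for s
    unfolding \<phi>_def
    by (rule derivative_eq_intros line_deriv[OF d1] line_deriv[OF d1] | simp add: algebra_simps)+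
  from mvt_simple[OF h this]
  obtain \<xi> where \<xi>: "\<xi> \<in> {0<..<h}" and 
    e1: "\<phi> h - \<phi> 0 = (h - 0) * (e \<bullet> Df ((z + h *\<^sub>R v) + \<xi> *\<^sub>R w) w - e \<bullet> Df (z + \<xi> *\<^sub>R w) w)"
    by blast
  define \<psi> where "\<psi> t = e \<bullet> Df ((z + \<xi> *\<^sub>R w) + t *\<^sub>R v) w" for t
  have "(\<psi> has_derivative (\<lambda>t. t * (e \<bullet> D2 ((z + \<xi> *\<^sub>R w) + s *\<^sub>R v) w v))) (at s within {0..h})" for s
    unfolding \<psi>_def by (rule line_deriv[OF d2])
  from mvt_simple[OF h this]
  obtain \<eta> where \<eta>: "\<eta> \<in> {0<..<h}" and 
    e2: "\<psi> h - \<psi> 0 = (h - 0) * (e \<bullet> D2 ((z + \<xi> *\<^sub>R w) + \<eta> *\<^sub>R v) w v)"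
    by blast
  define p where "p = (z + \<xi> *\<^sub>R w) + \<eta> *\<^sub>R v"
  have "norm (p - z) \<le> norm (\<xi> *\<^sub>R w) + norm (\<eta> *\<^sub>R v)"
    unfolding p_def by (metis add_diff_cancel_left' norm_triangle_ineq add.assoc)
  also have "\<dots> \<le> h * norm w + h * norm v"
    using \<xi> \<eta> by (intro add_mono) (auto intro!: mult_right_mono)
  finally have n: "norm (p - z) \<le> h * (norm v + norm w)" by (simp add: algebra_simps)
  have "e \<bullet> (f (z + h *\<^sub>R w + h *\<^sub>R v) - f (z + h *\<^sub>R w) - f (z + h *\<^sub>R v) + f z) = \<phi> h - \<phi> 0"
    unfolding \<phi>_def by (simp add: inner_diff_right inner_add_right algebra_simps)
  also have "\<dots> = h * (\<psi> h - \<psi> 0)" using e1 unfolding \<psi>_def by (simp add: algebra_simps)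
  also have "\<dots> = h^2 * (e \<bullet> D2 p w v)" using e2 unfolding p_def by (simp add: power2_eq_square)
  finally show ?thesis using n by blast
qed

lemma schwarz:
  fixes f :: "'a::euclidean_space \<Rightarrow> 'b::euclidean_space"
  assumes d1: "\<And>z. (f has_derivative Df z) (at z)"
   and d2: "\<And>v. \<And>z. ((\<lambda>z. Df z v) has_derivative D2 z v) (at z)"
   and c2: "\<And>v w. continuous_on UNIV (\<lambda>z. D2 z v w)"
  shows "D2 z v w = D2 z w v"
proof -
  have key: "e \<bullet> D2 z w v = e \<bullet> D2 z v w" for e
  proof -
    define F where "F p = e \<bullet> D2 p w v" for p
    define G where "G p = e \<bullet> D2 p v w" for p
    have cF: "isCont F z" unfolding F_def
      using c2[of w v] by (intro continuous_intros) (simp add: continuous_on_eq_continuous_at)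
    have cG: "isCont G z" unfolding G_def
      using c2[of v w] by (intro continuous_intros) (simp add: continuous_on_eq_continuous_at)
    have small: "\<bar>F z - G z\<bar> < 2 * \<epsilon>" if "\<epsilon> > 0" for \<epsilon>
    proof -
      obtain d1' where d1': "d1' > 0" "\<And>p. dist p z < d1' \<Longrightarrow> dist (F p) (F z) < \<epsilon>"
        using cF \<open>\<epsilon> > 0\<close> unfolding continuous_at_eps_delta by metis
      obtain d2' where d2': "d2' > 0" "\<And>p. dist p z < d2' \<Longrightarrow> dist (G p) (G z) < \<epsilon>"
        using cG \<open>\<epsilon> > 0\<close> unfolding continuous_at_eps_delta by metis
      define h where "h = min d1' d2' / (2 * (norm v + norm w + 1))"
      have npos: "norm v + norm w + 1 > 0" by (smt (verit) norm_ge_zero)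
      then have hpos: "h > 0" unfolding h_def using d1' d2' by (intro divide_pos_pos) auto
      have hb: "h * (norm v + norm w) < min d1' d2'"
      proof -
        have "h * (norm v + norm w) \<le> h * (norm v + norm w + 1)" using hpos by simp
        also have "\<dots> = min d1' d2' / 2" unfolding h_def using npos by (simp add: field_simps)
        also have "\<dots> < min d1' d2'" using d1'(1) d2'(1) by linarith
        finally show ?thesis .
      qed
      obtain p1 where p1: "norm (p1 - z) \<le> h * (norm v + norm w)"
        "e \<bullet> (f (z + h *\<^sub>R w + h *\<^sub>R v) - f (z + h *\<^sub>R w) - f (z + h *\<^sub>R v) + f z) = h^2 * F p1"
        using mvt2[OF d1 d2 hpos, of z v w e] unfolding F_def by blast
      obtain p2 where p2: "norm (p2 - z) \<le> h * (norm w + norm v)"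
        "e \<bullet> (f (z + h *\<^sub>R v + h *\<^sub>R w) - f (z + h *\<^sub>R v) - f (z + h *\<^sub>R w) + f z) = h^2 * G p2"
        using mvt2[OF d1 d2 hpos, of z w v e] unfolding G_def by blast
      have "h^2 * F p1 = h^2 * G p2" using p1(2) p2(2) by (simp add: algebra_simps)
      then have eq: "F p1 = G p2" using hpos by simp
      have "dist p1 z < d1'" using p1(1) hb by (simp add: dist_norm)
      then have a: "\<bar>F p1 - F z\<bar> < \<epsilon>" using d1' by (simp add: dist_real_def)
      have "dist p2 z < d2'" using p2(1) hb by (simp add: dist_norm add.commute)
      then have b: "\<bar>G p2 - G z\<bar> < \<epsilon>" using d2' by (simp add: dist_real_def)
      show ?thesis using a b eq by linarith
    qed
    have "F z = G z"
    proof (rule ccontr)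
      assume "F z \<noteq> G z"
      then have "\<bar>F z - G z\<bar> / 4 > 0" by simp
      from small[OF this] show False by simp
    qed
    then show ?thesis unfolding F_def G_def .
  qed
  have "(D2 z v w - D2 z w v) \<bullet> (D2 z v w - D2 z w v) = 0"
    using key[of "D2 z v w - D2 z w v"] by (simp add: inner_diff_left inner_diff_right)
  then show ?thesis by simp
qed



lemma lim_affine_at_bot:
  fixes a b c :: "'a::real_normed_vector"
  assumes lim: "((\<lambda>s::real. a + s *\<^sub>R b) \<longlongrightarrow> c) at_bot"
  shows "b = 0 \<and> a = c"
proof -
  have sh: "filterlim (\<lambda>s::real. s - 1) at_bot at_bot" by real_asymp
  have l2: "((\<lambda>s::real. a + (s - 1) *\<^sub>R b) \<longlongrightarrow> c) at_bot"
    using filterlim_compose[OF lim sh] by simp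
  have "((\<lambda>s::real. (a + s *\<^sub>R b) - (a + (s - 1) *\<^sub>R b)) \<longlongrightarrow> c - c) at_bot"
    by (intro tendsto_diff lim l2)
  then have "((\<lambda>s::real. b) \<longlongrightarrow> 0) at_bot" by (simp add: algebra_simps)
  then have b: "b = 0" using tendsto_unique[OF trivial_limit_at_bot_linorder tendsto_const] by blast
  then have "((\<lambda>s::real. a) \<longlongrightarrow> c) at_bot" using lim by simp
  then have "a = c" using tendsto_unique[OF trivial_limit_at_bot_linorder tendsto_const] by blast
  with b show ?thesis by simp
qed

lemma omega_skew:
  fixes \<Omega> :: "'a::real_vector \<Rightarrow> 'a \<Rightarrow> real"
  assumes "bilinear \<Omega>" "\<forall>x. \<Omega> x x = 0"
  shows "\<Omega> a b = - \<Omega> b a"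
proof -
  have "0 = \<Omega> (a + b) (a + b)" using assms(2) by simp
  also have "\<dots> = \<Omega> a a + \<Omega> a b + \<Omega> b a + \<Omega> b b"
    using assms(1) by (simp add: bilinear_ladd bilinear_radd)
  finally show ?thesis using assms(2)[rule_format, of a] assms(2)[rule_format, of b] by linarith
qed

lemma omega_twist:
  fixes \<Omega> :: "'a::real_vector \<Rightarrow> 'a \<Rightarrow> real"
  assumes bl: "bilinear \<Omega>" and alt: "\<forall>x. \<Omega> x x = 0"
    and sa: "\<forall>x y. \<Omega> (A x) y + \<Omega> x (A y) = 0"
  shows "\<Omega> (a - A a) b - \<Omega> (b - A b) a = 2 * \<Omega> a b"
proof -
  have "\<Omega> (a - A a) b = \<Omega> a b - \<Omega> (A a) b" using bl by (simp add: bilinear_lsub)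
  moreover have "\<Omega> (b - A b) a = \<Omega> b a - \<Omega> (A b) a" using bl by (simp add: bilinear_lsub)
  moreover have "\<Omega> b a = - \<Omega> a b" by (rule omega_skew[OF bl alt])
  moreover have "\<Omega> (A b) a = - \<Omega> b (A a)" using sa[rule_format, of b a] by linarith
  moreover have "\<Omega> b (A a) = - \<Omega> (A a) b" by (rule omega_skew[OF bl alt])
  ultimately show ?thesis by simp
qed

lemma omega_nondeg_eq:
  assumes "symplectic_form \<Omega>" "\<And>y. \<Omega> a y = \<Omega> b y"
  shows "a = b"
proof -
  have "\<forall>y. \<Omega> (a - b) y = 0" using assms by (simp add: symplectic_form_def bilinear_lsub)
  then show ?thesis using assms(1) unfolding symplectic_form_def by auto
qed

lemma smooth_facts:
  fixes g :: "'a::euclidean_space \<Rightarrow> 'b::euclidean_space"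
  assumes "smooth_map g"
  defines "Dg \<equiv> (\<lambda>z. frechet_derivative g (at z))"
  defines "D2 \<equiv> (\<lambda>z v. frechet_derivative (\<lambda>z. Dg z v) (at z))"
  shows "\<And>z. (g has_derivative Dg z) (at z)"
    and "\<And>v. continuous_on UNIV (\<lambda>z. Dg z v)"
    and "\<And>v z. ((\<lambda>z. Dg z v) has_derivative D2 z v) (at z)"
    and "\<And>v w. continuous_on UNIV (\<lambda>z. D2 z v w)"
proof -
  have a: "\<forall>z. g differentiable at z" and b: "\<forall>v. smooth_map (\<lambda>z. Dg z v)"
    using assms(1) unfolding Dg_def by (auto elim: smooth_map.cases)
  show "(g has_derivative Dg z) (at z)" for z
    using a frechet_derivative_works unfolding Dg_def by blast
  fix v
  have c: "\<forall>z. (\<lambda>z. Dg z v) differentiable at z" "continuous_on UNIV (\<lambda>z. Dg z v)"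
     "\<forall>w. smooth_map (\<lambda>z. D2 z v w)"
    using b[rule_format, of v] unfolding D2_def by (auto elim: smooth_map.cases)
  show "continuous_on UNIV (\<lambda>z. Dg z v)" using c by blast
  show "((\<lambda>z. Dg z v) has_derivative D2 z v) (at z)" for z
    using c(1) frechet_derivative_works unfolding D2_def by blast
  show "continuous_on UNIV (\<lambda>z. D2 z v w)" for w
    using c(3) by (auto elim: smooth_map.cases)
qed



lemma aut_sub_step2:
  fixes g :: "'a::euclidean_space \<Rightarrow> 'a" and \<Omega> :: "'a \<Rightarrow> 'a \<Rightarrow> real"
  assumes sf: "symplectic_form \<Omega>" and lA: "linear A"
    and sa: "\<forall>x y. \<Omega> (A x) y + \<Omega> x (A y) = 0"
    and sm: "smooth_map g"
    and pb: "\<And>z v. \<Omega> (g z - A (g z)) (frechet_derivative g (at z) v) = \<Omega> (z - A z) v"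
  shows "\<Omega> (frechet_derivative g (at z) w) (frechet_derivative g (at z) v) = \<Omega> w v"
proof -
  define Dg where "Dg z = frechet_derivative g (at z)" for z
  define D2 where "D2 z v = frechet_derivative (\<lambda>z. Dg z v) (at z)" for z v
  have sfx1: "\<And>z. (g has_derivative Dg z) (at z)"
    and sfx2: "\<And>v. continuous_on UNIV (\<lambda>z. Dg z v)"
    and sfx3: "\<And>v z. ((\<lambda>z. Dg z v) has_derivative D2 z v) (at z)"
    and sfx4: "\<And>v w. continuous_on UNIV (\<lambda>z. D2 z v w)"
    unfolding D2_def Dg_def using smooth_facts[OF sm] by auto
  note sfx = sfx1 sfx2 sfx3 sfx4
  have bl: "bilinear \<Omega>" and alt: "\<forall>x. \<Omega> x x = 0" using sf unfolding symplectic_form_def by auto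
  have bb: "bounded_bilinear \<Omega>" using bl bilinear_conv_bounded_bilinear by blast
  have blA: "bounded_linear A" using lA linear_conv_bounded_linear by blast
  have E: "\<Omega> (Dg z w - A (Dg z w)) (Dg z v) + \<Omega> (g z - A (g z)) (D2 z v w) = \<Omega> (w - A w) v" for v w
  proof -
    have dP: "((\<lambda>z. g z - A (g z)) has_derivative (\<lambda>w. Dg z w - A (Dg z w))) (at z)"
      using has_derivative_diff[OF sfx(1) bounded_linear.has_derivative[OF blA sfx(1)]] .
    have dL: "((\<lambda>z. \<Omega> (g z - A (g z)) (Dg z v)) has_derivative
        (\<lambda>w. \<Omega> (g z - A (g z)) (D2 z v w) + \<Omega> (Dg z w - A (Dg z w)) (Dg z v))) (at z)"
      by (rule bounded_bilinear.FDERIV[OF bb dP sfx(3)])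
    have dz: "((\<lambda>z. z - A z) has_derivative (\<lambda>w. w - A w)) (at z)"
      using has_derivative_diff[OF has_derivative_ident bounded_linear.has_derivative[OF blA has_derivative_ident]] .
    have dR: "((\<lambda>z. \<Omega> (z - A z) v) has_derivative (\<lambda>w. \<Omega> (z - A z) 0 + \<Omega> (w - A w) v)) (at z)"
      by (rule bounded_bilinear.FDERIV[OF bb dz has_derivative_const])
    have eqf: "(\<lambda>z. \<Omega> (g z - A (g z)) (Dg z v)) = (\<lambda>z. \<Omega> (z - A z) v)"
      using pb unfolding Dg_def by auto
    have "(\<lambda>w. \<Omega> (g z - A (g z)) (D2 z v w) + \<Omega> (Dg z w - A (Dg z w)) (Dg z v)) = (\<lambda>w. \<Omega> (z - A z) 0 + \<Omega> (w - A w) v)"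
      using has_derivative_unique[OF dL dR[folded eqf]] .
    then have "\<Omega> (g z - A (g z)) (D2 z v w) + \<Omega> (Dg z w - A (Dg z w)) (Dg z v) = \<Omega> (z - A z) 0 + \<Omega> (w - A w) v"
      by meson
    then show ?thesis using bl by (simp add: bilinear_rzero)
  qed
  have sym: "D2 z v w = D2 z w v"
    by (rule schwarz[OF sfx(1) sfx(3) sfx(4)])
  have "\<Omega> (Dg z w - A (Dg z w)) (Dg z v) - \<Omega> (Dg z v - A (Dg z v)) (Dg z w) = \<Omega> (w - A w) v - \<Omega> (v - A v) w"
    using E[of v w] E[of w v] sym by simp
  then have "2 * \<Omega> (Dg z w) (Dg z v) = 2 * \<Omega> w v"
    using omega_twist[OF bl alt sa] by simp
  then show ?thesis unfolding Dg_def by simp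
qed



lemma equivariance:
  fixes g :: "'a::euclidean_space \<Rightarrow> 'a" and Dg :: "'a \<Rightarrow> 'a \<Rightarrow> 'a"
  assumes lA: "linear A" and nil: "\<And>x. A (A x) = 0"
    and d1: "\<And>z. (g has_derivative Dg z) (at z)"
    and star: "\<And>z. Dg z (z - A z) = g z - A (g z)"
  shows "g (exp s *\<^sub>R (z - s *\<^sub>R A z)) = exp s *\<^sub>R (g z - s *\<^sub>R A (g z))"
proof -
  have blA: "bounded_linear A" using lA linear_conv_bounded_linear by blast
  define c where "c s = exp s *\<^sub>R (z - s *\<^sub>R A z)" for s
  define h where "h s = g (c s)" for s
  define m where "m s = exp (- s) *\<^sub>R (h s + s *\<^sub>R A (h s))" for s
  have Ac: "A (c s) = exp s *\<^sub>R A z" for s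
    unfolding c_def by (simp add: linear_scale[OF lA] linear_diff[OF lA] nil)
  have dc: "(c has_derivative (\<lambda>t. t *\<^sub>R (c s - A (c s)))) (at s)" for s
  proof -
    have "(c has_derivative (\<lambda>t. t *\<^sub>R (exp s *\<^sub>R (z - s *\<^sub>R A z)) + exp s *\<^sub>R (- (t *\<^sub>R A z)))) (at s)"
      unfolding c_def by (rule derivative_eq_intros refl | simp)+
    then show ?thesis unfolding Ac by (simp add: c_def algebra_simps)
  qed
  have dh: "(h has_derivative (\<lambda>t. t *\<^sub>R (h s - A (h s)))) (at s)" for s
  proof -
    have "(h has_derivative (\<lambda>t. Dg (c s) (t *\<^sub>R (c s - A (c s))))) (at s)"
      unfolding h_def by (rule has_derivative_compose[OF dc d1])
    moreover have "linear (Dg (c s))" using d1 has_derivative_linear by blast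
    ultimately show ?thesis unfolding h_def by (simp add: linear_scale star)
  qed
  have dm: "(m has_derivative (\<lambda>t. 0)) (at s)" for s
  proof -
    have dAh: "((\<lambda>s. A (h s)) has_derivative (\<lambda>t. A (t *\<^sub>R (h s - A (h s))))) (at s)"
      by (rule bounded_linear.has_derivative[OF blA dh])
    have "(m has_derivative (\<lambda>t. exp (- s) *\<^sub>R (t *\<^sub>R (h s - A (h s)) + (s *\<^sub>R A (t *\<^sub>R (h s - A (h s))) + t *\<^sub>R A (h s)))
          + (- t * exp (- s)) *\<^sub>R (h s + s *\<^sub>R A (h s)))) (at s)"
      unfolding m_def by (rule derivative_eq_intros dh dAh refl | simp)+
    moreover have "A (t *\<^sub>R (h s - A (h s))) = t *\<^sub>R A (h s)" for t
      by (simp add: linear_scale[OF lA] linear_diff[OF lA] nil)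
    ultimately show ?thesis by (simp add: algebra_simps)
  qed
  have "m s = m 0"
    using has_derivative_zero_unique[of UNIV m s 0] dm by simp
  then have meq: "exp (- s) *\<^sub>R (h s + s *\<^sub>R A (h s)) = g z"
    unfolding m_def h_def c_def by simp
  have "A (exp (- s) *\<^sub>R (h s + s *\<^sub>R A (h s))) = exp (- s) *\<^sub>R A (h s)"
    by (simp add: linear_scale[OF lA] linear_add[OF lA] nil)
  then have "exp (- s) *\<^sub>R A (h s) = A (g z)" using meq by simp
  then have Ah: "A (h s) = exp s *\<^sub>R A (g z)"
    by (metis exp_minus_inverse mult.commute scaleR_one scaleR_scaleR)
  have "h s + s *\<^sub>R A (h s) = exp s *\<^sub>R g z"
    using meq by (metis exp_minus_inverse mult.commute scaleR_one scaleR_scaleR)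
  then have "h s = exp s *\<^sub>R g z - s *\<^sub>R A (h s)" by (simp add: algebra_simps)
  then have "h s = exp s *\<^sub>R (g z - s *\<^sub>R A (g z))" unfolding Ah by (simp add: algebra_simps)
  then show ?thesis unfolding h_def c_def .
qed



lemma aut_sub:
  fixes g :: "'a::euclidean_space \<Rightarrow> 'a" and \<Omega> :: "'a \<Rightarrow> 'a \<Rightarrow> real"
  assumes sf: "symplectic_form \<Omega>" and lA: "linear A"
    and sa: "\<forall>x y. \<Omega> (A x) y + \<Omega> x (A y) = 0"
    and nil: "\<And>x. A (A x) = 0"
    and sm: "smooth_map g"
    and pb: "\<And>z v. \<Omega> (g z - A (g z)) (frechet_derivative g (at z) v) = \<Omega> (z - A z) v"
  shows "linear g \<and> (\<forall>x y. \<Omega> (g x) (g y) = \<Omega> x y) \<and> (\<forall>x. g (A x) = A (g x))"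
proof -
  define Dg where "Dg z = frechet_derivative g (at z)" for z
  have d1: "\<And>z. (g has_derivative Dg z) (at z)"
    and c1: "\<And>v. continuous_on UNIV (\<lambda>z. Dg z v)"
    unfolding Dg_def using smooth_facts[OF sm] by auto
  have bl: "bilinear \<Omega>" using sf unfolding symplectic_form_def by auto
  have blA: "bounded_linear A" using lA linear_conv_bounded_linear by blast
  have om: "\<Omega> (Dg z w) (Dg z v) = \<Omega> w v" for z w v
    unfolding Dg_def by (rule aut_sub_step2[OF sf lA sa sm pb])
  have lin: "linear (Dg z)" for z using d1 has_derivative_linear by blast
  have surj: "surj (Dg z)" for z
  proof -
    have "inj (Dg z)"
      unfolding linear_injective_0[OF lin]
    proof (intro allI impI)
      fix w assume "Dg z w = 0"
      then have "\<Omega> w v = 0" for v using om[of z w v] bl by (simp add: bilinear_lzero)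
      then show "w = 0" using sf unfolding symplectic_form_def by auto
    qed
    then show ?thesis using linear_injective_imp_surjective[OF lin] by blast
  qed
  have star: "Dg z (z - A z) = g z - A (g z)" for z
  proof (rule omega_nondeg_eq[OF sf])
    fix y
    obtain v where v: "y = Dg z v" using surj[of z] by (metis surjD)
    show "\<Omega> (Dg z (z - A z)) y = \<Omega> (g z - A (g z)) y"
      unfolding v om using pb[of z v] unfolding Dg_def by simp
  qed
  define \<phi> where "\<phi> s x = exp s *\<^sub>R (x - s *\<^sub>R A x)" for s x
  have eqv: "g (\<phi> s z) = \<phi> s (g z)" for s z
    unfolding \<phi>_def by (rule equivariance[OF lA nil d1 star])
  have A0: "A 0 = 0" using lA linear_0 by blast
  have g0: "g 0 = 0"
  proof -
    have e: "g 0 = exp s *\<^sub>R (g 0 - s *\<^sub>R A (g 0))" for s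
      using eqv[of s 0] unfolding \<phi>_def by (simp add: A0)
    have "A (g 0) = exp 1 *\<^sub>R A (g 0)"
      using arg_cong[OF e[of 1], of A] by (simp add: linear_scale[OF lA] linear_diff[OF lA] nil)
    then have "(exp 1 - 1) *\<^sub>R A (g 0) = 0" by (simp add: algebra_simps)
    then have Ag0: "A (g 0) = 0" by simp
    have "g 0 = exp 1 *\<^sub>R g 0" using e[of 1] Ag0 by simp
    then have "(exp 1 - 1) *\<^sub>R g 0 = 0" by (simp add: algebra_simps)
    then show ?thesis by simp
  qed
  define L where "L = Dg 0"
  have key: "Dg z w = L w \<and> Dg z (A w) = A (Dg z w)" for z w
  proof -
    define D where "D = Dg z"
    have EQ: "Dg (\<phi> s z) (u - s *\<^sub>R A u) = D u - s *\<^sub>R A (D u)" for s u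
    proof -
      have dphi: "((\<phi> s) has_derivative (\<phi> s)) (at x)" for x
        unfolding \<phi>_def by (rule derivative_eq_intros bounded_linear.has_derivative[OF blA] refl | simp)+
      have dL: "((\<lambda>x. g (\<phi> s x)) has_derivative (\<lambda>w. Dg (\<phi> s z) (\<phi> s w))) (at z)"
        by (rule has_derivative_compose[OF dphi d1])
      have dR: "((\<lambda>x. \<phi> s (g x)) has_derivative (\<lambda>w. \<phi> s (Dg z w))) (at z)"
        by (rule has_derivative_compose[OF d1 dphi])
      have "(\<lambda>w. Dg (\<phi> s z) (\<phi> s w)) = (\<lambda>w. \<phi> s (Dg z w))"
        using has_derivative_unique[OF dL] dR eqv by (simp add: eqv)
      then have "Dg (\<phi> s z) (\<phi> s u) = \<phi> s (Dg z u)" by meson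
      then have "exp s *\<^sub>R Dg (\<phi> s z) (u - s *\<^sub>R A u) = exp s *\<^sub>R (D u - s *\<^sub>R A (D u))"
        unfolding \<phi>_def D_def by (simp add: linear_scale[OF lin])
      then show ?thesis by simp
    qed
    have phi0: "((\<lambda>s. \<phi> s z) \<longlongrightarrow> 0) at_bot"
    proof -
      have l: "((\<lambda>s::real. s * exp s) \<longlongrightarrow> 0) at_bot" by real_asymp
      have "((\<lambda>s. exp s *\<^sub>R z - (s * exp s) *\<^sub>R A z) \<longlongrightarrow> 0 *\<^sub>R z - 0 *\<^sub>R A z) at_bot"
        by (intro tendsto_intros exp_at_bot l)
      then show ?thesis unfolding \<phi>_def by (simp add: algebra_simps)
    qed
    have lim: "((\<lambda>s. Dg (\<phi> s z) y) \<longlongrightarrow> L y) at_bot" for y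
    proof -
      have "isCont (\<lambda>p. Dg p y) 0" using c1[of y] by (simp add: continuous_on_eq_continuous_at)
      from isCont_tendsto_compose[OF this phi0] show ?thesis unfolding L_def .
    qed
    have e1: "Dg (\<phi> s z) (A w) = D (A w) + s *\<^sub>R (- A (D (A w)))" for s
      using EQ[of s "A w"] by (simp add: nil)
    have "((\<lambda>s. D (A w) + s *\<^sub>R (- A (D (A w)))) \<longlongrightarrow> L (A w)) at_bot"
      using lim[of "A w"] unfolding e1 .
    from lim_affine_at_bot[OF this] have r1: "A (D (A w)) = 0" "D (A w) = L (A w)" by auto
    have e2: "Dg (\<phi> s z) w = D w + s *\<^sub>R (D (A w) - A (D w))" for s
    proof -
      have "Dg (\<phi> s z) (w - s *\<^sub>R A w) = Dg (\<phi> s z) w - s *\<^sub>R Dg (\<phi> s z) (A w)"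
        by (simp add: linear_diff[OF lin] linear_scale[OF lin])
      then show ?thesis using EQ[of s w] e1[of s] r1 by (simp add: algebra_simps)
    qed
    have "((\<lambda>s. D w + s *\<^sub>R (D (A w) - A (D w))) \<longlongrightarrow> L w) at_bot"
      using lim[of w] unfolding e2 .
    from lim_affine_at_bot[OF this] show ?thesis unfolding D_def by auto
  qed
  have DgL: "Dg z = L" for z using key by auto
  have linL: "linear L" unfolding L_def by (rule lin)
  have gL: "g = L"
  proof
    fix x
    have "((\<lambda>x. g x - L x) has_derivative (\<lambda>h. 0)) (at y within UNIV)" for y
    proof -
      have "((\<lambda>x. g x - L x) has_derivative (\<lambda>h. Dg y h - L h)) (at y)"
        by (intro has_derivative_diff d1 linear_imp_has_derivative linL)
      then show ?thesis by (simp add: DgL)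
    qed
    from has_derivative_zero_unique[OF convex_UNIV this] have "g x - L x = g 0 - L 0" by blast
    then show "g x = L x" using g0 linL linear_0 by fastforce
  qed
  show ?thesis
  proof (intro conjI allI)
    show "linear g" using gL linL by simp
    show "\<Omega> (g x) (g y) = \<Omega> x y" for x y using om[of 0 x y] gL unfolding L_def by simp
    show "g (A x) = A (g x)" for x using key[of 0 x] gL unfolding L_def by simp
  qed
qed


theorem theorem5:
  fixes \<Omega> :: "'a::euclidean_space \<Rightarrow> 'a \<Rightarrow> real" and A :: "'a \<Rightarrow> 'a"
  assumes "symplectic_form \<Omega>"
    and "linear A"
    and "\<forall>x y. \<Omega> (A x) y + \<Omega> x (A y) = 0"
    and "A \<circ> A = (\<lambda>x. 0)"
  shows "Aut (theta \<Omega> A) = {g \<in> Sp \<Omega>. g \<circ> A = A \<circ> g}"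
proof
  have nil: "\<And>x. A (A x) = 0" using assms(4) by (metis comp_apply)
  have bl: "bilinear \<Omega>" using assms(1) unfolding symplectic_form_def by auto
  show "Aut (theta \<Omega> A) \<subseteq> {g \<in> Sp \<Omega>. g \<circ> A = A \<circ> g}"
  proof
    fix g assume "g \<in> Aut (theta \<Omega> A)"
    then have dg: "diffeomorphism g" and pbe: "pullback g (theta \<Omega> A) = theta \<Omega> A"
      unfolding Aut_def by auto
    have pb: "\<Omega> (g z - A (g z)) (frechet_derivative g (at z) v) = \<Omega> (z - A z) v" for z v
      using fun_cong[OF fun_cong[OF pbe, of z], of v] unfolding pullback_def theta_def by simp
    have sm: "smooth_map g" and bj: "bij g" using dg unfolding diffeomorphism_def by auto
    from aut_sub[OF assms(1,2,3) nil sm pb]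
    have r: "linear g" "\<forall>x y. \<Omega> (g x) (g y) = \<Omega> x y" "\<forall>x. g (A x) = A (g x)" by auto
    show "g \<in> {g \<in> Sp \<Omega>. g \<circ> A = A \<circ> g}"
      using r bj unfolding Sp_def by (auto simp: fun_eq_iff)
  qed
  show "{g \<in> Sp \<Omega>. g \<circ> A = A \<circ> g} \<subseteq> Aut (theta \<Omega> A)"
  proof
    fix g assume "g \<in> {g \<in> Sp \<Omega>. g \<circ> A = A \<circ> g}"
    then have lg: "linear g" and bj: "bij g" and sp: "\<And>x y. \<Omega> (g x) (g y) = \<Omega> x y"
      and cm: "\<And>x. g (A x) = A (g x)"
      unfolding Sp_def by (auto simp: fun_eq_iff)
    have li: "linear (inv g)" using inj_linear_imp_inv_linear[OF lg] bj bij_is_inj by blast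
    have dg: "diffeomorphism g" unfolding diffeomorphism_def
      using bj smooth_linear[OF lg] smooth_linear[OF li] by auto
    have fd: "frechet_derivative g (at z) = g" for z
      using frechet_derivative_at[OF linear_imp_has_derivative[OF lg]] by simp
    have "pullback g (theta \<Omega> A) = theta \<Omega> A"
    proof (intro ext)
      fix z v
      have "g z - A (g z) = g (z - A z)" using cm linear_diff[OF lg] by simp
      then show "pullback g (theta \<Omega> A) z v = theta \<Omega> A z v"
        unfolding pullback_def theta_def fd using sp by simp
    qed
    then show "g \<in> Aut (theta \<Omega> A)" unfolding Aut_def using dg by auto
  qed
qed

end
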